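(* Let $X$ be an $n\times p$ real matrix ($n \ge p$) whose columns have $\ell_2$-norm $1$, such that $X^T X$ is invertible, and let $Y\in\mathbb{R}^n$. Let $M=(X^TX)^{-1}$ and suppose that $M$ is strictly diagonally dominant: $$M_{jj} > \sum_{i\neq j} |M_{ij}| \quad \text{for all } j=1,\dots,p.$$ For $\lambda>0$, the Lasso solution is the minimizer of $$\min_{\beta\in\mathbb{R}^p} \tfrac12 \|Y-X\beta\|_2^2 + \lambda\|\beta\|_1,$$ and the Dantzig solution is the minimizer of $$\min_{\beta\in\mathbb{R}^p} \|\beta\|_1 \quad\text{subject to}\quad \|X^T(Y-X\beta)\|_\infty \le \lambda.$$ Then for every $\lambda>0$ the Lasso solution and the Dantzig solution are identical, i.e., the Lasso and Dantzig regularization paths $\lambda\mapsto\hat\beta_\lambda$ coincide.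
   Context: $\|\cdot\|_1$, $\|\cdot\|_2$, $\|\cdot\|_\infty$ denote the usual $\ell_1$, $\ell_2$, $\ell_\infty$ norms on Euclidean space. The normalization of the columns of $X$ to unit $\ell_2$-norm is a standing assumption of the paper. *)

theory Defs
  imports "HOL-Analysis.Analysis"
begin

definition l1norm :: "real ^ 'n \<Rightarrow> real" where
  "l1norm v = (\<Sum>i\<in>UNIV. \<bar>v $ i\<bar>)"

definition linfnorm :: "real ^ 'n \<Rightarrow> real" where
  "linfnorm v = Max (range (\<lambda>i. \<bar>v $ i\<bar>))"

definition lasso_obj :: "real ^ 'p ^ 'n \<Rightarrow> real ^ 'n \<Rightarrow> real \<Rightarrow> real ^ 'p \<Rightarrow> real" where
  "lasso_obj X Y lam b = (1/2) * (norm (Y - X *v b))\<^sup>2 + lam * l1norm b"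

definition is_lasso_solution :: "real ^ 'p ^ 'n \<Rightarrow> real ^ 'n \<Rightarrow> real \<Rightarrow> real ^ 'p \<Rightarrow> bool" where
  "is_lasso_solution X Y lam b \<longleftrightarrow> (\<forall>b'. lasso_obj X Y lam b \<le> lasso_obj X Y lam b')"

definition dantzig_feasible :: "real ^ 'p ^ 'n \<Rightarrow> real ^ 'n \<Rightarrow> real \<Rightarrow> real ^ 'p \<Rightarrow> bool" where
  "dantzig_feasible X Y lam b \<longleftrightarrow> linfnorm (transpose X *v (Y - X *v b)) \<le> lam"

definition is_dantzig_solution :: "real ^ 'p ^ 'n \<Rightarrow> real ^ 'n \<Rightarrow> real \<Rightarrow> real ^ 'p \<Rightarrow> bool" where
  "is_dantzig_solution X Y lam b \<longleftrightarrow> dantzig_feasible X Y lam b \<and>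
     (\<forall>b'. dantzig_feasible X Y lam b' \<longrightarrow> l1norm b \<le> l1norm b')"

end

theory Submission
  imports Defs
begin

lemma linfnorm_le: "linfnorm (v::real^'n) \<le> c \<longleftrightarrow> (\<forall>i. \<bar>v$i\<bar> \<le> c)"
  unfolding linfnorm_def by (subst Max_le_iff) auto

lemma inv_props:
  fixes A :: "real^'n^'n"
  assumes "invertible A"
  shows "A ** matrix_inv A = mat 1" "matrix_inv A ** A = mat 1"
proof -
  from assms obtain A' where "A ** A' = mat 1 \<and> A' ** A = mat 1" unfolding invertible_def by blast
  hence "A ** matrix_inv A = mat 1 \<and> matrix_inv A ** A = mat 1"
    unfolding matrix_inv_def by (rule someI)
  thus "A ** matrix_inv A = mat 1" "matrix_inv A ** A = mat 1" by auto
qed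

lemma resid_eq:
  fixes X :: "real ^ 'p ^ 'n"
  shows "transpose X *v (Y - X *v b) = transpose X *v Y - (transpose X ** X) *v b"
  by (simp only: matrix_vector_mult_diff_distrib matrix_vector_mul_assoc)

lemma kkt_min:
  fixes X :: "real ^ 'p ^ 'n" and Y :: "real ^ 'n"
  assumes kkt: "\<And>j. \<bar>(transpose X *v (Y - X *v b))$j\<bar> \<le> lam"
    and kkt2: "\<And>j. b$j \<noteq> 0 \<Longrightarrow> (transpose X *v (Y - X *v b))$j = lam * sgn (b$j)"
  shows "lasso_obj X Y lam b' \<ge> lasso_obj X Y lam b + (1/2) * (norm (X *v (b' - b)))\<^sup>2"
proof -
  define r where "r = transpose X *v (Y - X *v b)"
  define e where "e = Y - X *v b"
  define d where "d = b' - b"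
  have lam0: "lam \<ge> 0" using kkt[of undefined] by linarith
  have "Y - X *v b' = e - X *v d" unfolding e_def d_def by (simp add: algebra_simps)
  hence n: "(norm (Y - X *v b'))\<^sup>2 = (norm e)\<^sup>2 - 2 * (e \<bullet> (X *v d)) + (norm (X *v d))\<^sup>2"
    by (simp add: power2_norm_eq_inner inner_diff_left inner_diff_right inner_commute)
  have rd: "e \<bullet> (X *v d) = r \<bullet> d"
    unfolding r_def e_def by (simp add: dot_lmul_matrix)
  have comp: "r$i * d$i \<le> lam * (\<bar>b'$i\<bar> - \<bar>b$i\<bar>)" for i
  proof (cases "b$i = 0")
    case True
    have "r$i * d$i \<le> \<bar>r$i\<bar> * \<bar>d$i\<bar>" by (metis abs_ge_self abs_mult)
    also have "\<dots> \<le> lam * \<bar>d$i\<bar>" using kkt[of i] unfolding r_def by (simp add: mult_right_mono)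
    finally show ?thesis using True unfolding d_def by simp
  next
    case False
    hence ri: "r$i = lam * sgn (b$i)" using kkt2 unfolding r_def by blast
    have "sgn (b$i) * b'$i \<le> \<bar>b'$i\<bar>" by (cases "b$i > 0") (auto simp: sgn_if)
    moreover have "sgn (b$i) * b$i = \<bar>b$i\<bar>" by (cases "b$i > 0") (auto simp: sgn_if)
    ultimately have "sgn (b$i) * d$i \<le> \<bar>b'$i\<bar> - \<bar>b$i\<bar>" unfolding d_def by (simp add: algebra_simps)
    from mult_left_mono[OF this lam0] show ?thesis using ri by (simp add: mult.assoc)
  qed
  have "r \<bullet> d = (\<Sum>i\<in>UNIV. r$i * d$i)" by (simp add: inner_vec_def)
  also have "\<dots> \<le> (\<Sum>i\<in>UNIV. lam * (\<bar>b'$i\<bar> - \<bar>b$i\<bar>))" by (rule sum_mono) (rule comp)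
  also have "\<dots> = lam * l1norm b' - lam * l1norm b"
    by (simp add: l1norm_def sum_distrib_left sum_subtractf algebra_simps)
  finally have "r \<bullet> d \<le> lam * l1norm b' - lam * l1norm b" .
  thus ?thesis unfolding lasso_obj_def using n rd unfolding e_def d_def by linarith
qed

lemma kkt_unique:
  fixes X :: "real ^ 'p ^ 'n" and Y :: "real ^ 'n"
  assumes inv: "invertible (transpose X ** X)"
    and kkt: "\<And>j. \<bar>(transpose X *v (Y - X *v b))$j\<bar> \<le> lam"
    and kkt2: "\<And>j. b$j \<noteq> 0 \<Longrightarrow> (transpose X *v (Y - X *v b))$j = lam * sgn (b$j)"
    and ne: "b' \<noteq> b"
  shows "lasso_obj X Y lam b' > lasso_obj X Y lam b"
proof -
  have "X *v (b' - b) \<noteq> 0"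
  proof
    assume "X *v (b' - b) = 0"
    hence "(transpose X ** X) *v (b' - b) = (transpose X ** X) *v 0"
      by (simp only: matrix_vector_mul_assoc[symmetric]) simp
    hence "b' - b = 0" using inj_matrix_vector_mult[OF inv] by (metis injD matrix_vector_mult_0_right)
    thus False using ne by simp
  qed
  hence "(norm (X *v (b' - b)))\<^sup>2 > 0" by simp
  thus ?thesis using kkt_min[of X Y b lam b', OF kkt kkt2] by linarith
qed

lemma dantzig_kkt:
  fixes X :: "real ^ 'p ^ 'n" and Y :: "real ^ 'n"
  assumes inv: "invertible (transpose X ** X)"
    and dd: "\<And>j. matrix_inv (transpose X ** X) $ j $ j >
               (\<Sum>i\<in>UNIV - {j}. \<bar>matrix_inv (transpose X ** X) $ i $ j\<bar>)"
    and D: "is_dantzig_solution X Y lam b"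
    and bj: "b$j \<noteq> 0"
  shows "(transpose X *v (Y - X *v b))$j = lam * sgn (b$j)"
proof (rule ccontr)
  assume neq: "(transpose X *v (Y - X *v b))$j \<noteq> lam * sgn (b$j)"
  define G where "G = transpose X ** X"
  define M where "M = matrix_inv G"
  define r where "r = transpose X *v (Y - X *v b)"
  define \<sigma> where "\<sigma> = sgn (b$j)"
  define m where "m = M$j$j"
  have GM: "G ** M = mat 1" using inv_props[OF inv] unfolding G_def M_def by simp
  have feas: "\<And>i. \<bar>r$i\<bar> \<le> lam" using D unfolding is_dantzig_solution_def dantzig_feasible_def
      linfnorm_le r_def by blast
  have sig: "\<sigma> = 1 \<or> \<sigma> = -1" using bj unfolding \<sigma>_def by (auto simp: sgn_if)
  have sb: "\<sigma> * b$j = \<bar>b$j\<bar>" using bj unfolding \<sigma>_def by (cases "b$j > 0") (auto simp: sgn_if)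
  have lt: "\<sigma> * r$j < lam" using feas[of j] neq sig unfolding r_def[symmetric] \<sigma>_def[symmetric]
    by (auto simp: abs_if split: if_splits)
  have lb: "- lam \<le> \<sigma> * r$j" using feas[of j] sig by (auto simp: abs_if split: if_splits)
  have sum0: "(\<Sum>i\<in>UNIV - {j}. \<bar>M $ i $ j\<bar>) \<ge> 0" by (rule sum_nonneg) simp
  have ddj: "m > (\<Sum>i\<in>UNIV - {j}. \<bar>M $ i $ j\<bar>)" using dd[of j] unfolding m_def M_def G_def .
  hence m0: "m > 0" using sum0 by linarith
  define \<epsilon> where "\<epsilon> = min (lam - \<sigma> * r$j) (\<bar>b$j\<bar> / m)"
  have e0: "\<epsilon> > 0" unfolding \<epsilon>_def using lt m0 bj by auto
  have e1: "\<epsilon> \<le> lam - \<sigma> * r$j" unfolding \<epsilon>_def by simp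
  have e2: "\<epsilon> * m \<le> \<bar>b$j\<bar>" unfolding \<epsilon>_def using m0 by (simp add: min_def field_simps)
  define v where "v = M *v axis j 1"
  have vi: "v$i = M$i$j" for i unfolding v_def by (simp add: matrix_vector_mult_basis column_def)
  define b' where "b' = b - (\<epsilon> * \<sigma>) *s v"
  have r': "transpose X *v (Y - X *v b') = r + (\<epsilon> * \<sigma>) *s axis j 1"
  proof -
    have y: "Y - X *v b' = (Y - X *v b) + (\<epsilon> * \<sigma>) *\<^sub>R (X *v v)"
      unfolding b'_def scalar_mult_eq_scaleR
      by (simp add: matrix_vector_mult_diff_distrib matrix_vector_mult_scaleR)
    have "transpose X *v (Y - X *v b') = r + (\<epsilon> * \<sigma>) *s (G *v v)"
      unfolding y r_def G_def scalar_mult_eq_scaleR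
      by (simp only: matrix_vector_right_distrib matrix_vector_mult_scaleR matrix_vector_mul_assoc)
    also have "G *v v = axis j 1" unfolding v_def by (simp add: matrix_vector_mul_assoc GM)
    finally show ?thesis .
  qed
  have "dantzig_feasible X Y lam b'"
    unfolding dantzig_feasible_def linfnorm_le r'
  proof
    fix i
    show "\<bar>(r + (\<epsilon> * \<sigma>) *s axis j 1) $ i\<bar> \<le> lam"
    proof (cases "i = j")
      case True
      have "\<bar>r$j + \<epsilon> * \<sigma>\<bar> \<le> lam" using sig e0 e1 lb lt by auto
      thus ?thesis using True by (simp add: axis_def)
    next
      case False
      thus ?thesis using feas[of i] by (simp add: axis_def)
    qed
  qed
  hence le: "l1norm b \<le> l1norm b'" using D unfolding is_dantzig_solution_def by blast
  have b'i: "b'$i = b$i - \<epsilon> * \<sigma> * M$i$j" for i unfolding b'_def by (simp add: vi)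
  have fj: "\<bar>b'$j\<bar> = \<bar>b$j\<bar> - \<epsilon> * m"
  proof -
    have "b'$j = \<sigma> * (\<bar>b$j\<bar> - \<epsilon> * m)" using b'i[of j] sb sig unfolding m_def
      by (auto simp: algebra_simps)
    thus ?thesis using e2 sig by (auto simp: abs_mult)
  qed
  have fi: "\<bar>b'$i\<bar> \<le> \<bar>b$i\<bar> + \<epsilon> * \<bar>M$i$j\<bar>" for i
  proof -
    have "\<bar>\<epsilon> * \<sigma> * M$i$j\<bar> = \<epsilon> * \<bar>M$i$j\<bar>" using sig e0 by (auto simp: abs_mult)
    thus ?thesis using b'i[of i] by (metis abs_triangle_ineq4)
  qed
  have "l1norm b' = \<bar>b'$j\<bar> + (\<Sum>i\<in>UNIV - {j}. \<bar>b'$i\<bar>)"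
    unfolding l1norm_def by (simp add: sum.remove)
  also have "\<dots> \<le> \<bar>b$j\<bar> - \<epsilon> * m + (\<Sum>i\<in>UNIV - {j}. \<bar>b$i\<bar> + \<epsilon> * \<bar>M$i$j\<bar>)"
    using fj by (simp add: sum_mono fi)
  also have "\<dots> = l1norm b - \<epsilon> * (m - (\<Sum>i\<in>UNIV - {j}. \<bar>M $ i $ j\<bar>))"
    unfolding l1norm_def by (simp add: sum.distrib sum_distrib_left sum.remove algebra_simps)
  also have "\<dots> < l1norm b" using e0 ddj by simp
  finally show False using le by simp
qed

lemma dantzig_exists:
  fixes X :: "real ^ 'p ^ 'n" and Y :: "real ^ 'n"
  assumes inv: "invertible (transpose X ** X)" and lam0: "lam \<ge> 0"
  shows "\<exists>b. is_dantzig_solution X Y lam b"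
proof -
  define G where "G = transpose X ** X"
  define M where "M = matrix_inv G"
  define c where "c = transpose X *v Y"
  have GM: "G ** M = mat 1" and MG: "M ** G = mat 1"
    using inv_props[OF inv] unfolding G_def M_def by simp_all
  define B where "B = cbox (- (\<chi> i. lam)) ((\<chi> i. lam) :: real^'p)"
  define S where "S = (\<lambda>r. M *v (c - r)) ` B"
  have feasS: "dantzig_feasible X Y lam b \<longleftrightarrow> b \<in> S" for b
  proof -
    have res: "transpose X *v (Y - X *v b) = c - G *v b"
      unfolding c_def G_def by (rule resid_eq)
    have boxr: "r \<in> B \<longleftrightarrow> (\<forall>i. \<bar>r$i\<bar> \<le> lam)" for r
      unfolding B_def mem_box_cart by (simp add: abs_le_iff) (meson minus_le_iff)
    show ?thesis
    proof
      assume "dantzig_feasible X Y lam b"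
      hence "c - G *v b \<in> B" unfolding dantzig_feasible_def linfnorm_le res boxr .
      moreover have "b = M *v (c - (c - G *v b))" by (simp add: matrix_vector_mul_assoc MG)
      ultimately show "b \<in> S" unfolding S_def by blast
    next
      assume "b \<in> S"
      then obtain r where r: "r \<in> B" "b = M *v (c - r)" unfolding S_def by blast
      have "c - G *v b = r" using r(2) by (simp add: matrix_vector_mul_assoc GM)
      thus "dantzig_feasible X Y lam b" using r(1)
        unfolding dantzig_feasible_def linfnorm_le res boxr by simp
    qed
  qed
  have "compact S" unfolding S_def B_def
    by (intro compact_continuous_image compact_cbox continuous_on_compose2[OF matrix_vector_mult_linear_continuous_on[of UNIV M]])
      (auto intro!: continuous_intros)
  moreover have "S \<noteq> {}"
  proof -
    have "(0::real^'p) \<in> B" unfolding B_def mem_box_cart using lam0 by simp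
    thus ?thesis unfolding S_def by blast
  qed
  moreover have "continuous_on S l1norm" unfolding l1norm_def by (intro continuous_intros)
  ultimately obtain b where "b \<in> S" "\<forall>y\<in>S. l1norm b \<le> l1norm y"
    using continuous_attains_inf by blast
  thus ?thesis unfolding is_dantzig_solution_def feasS by blast
qed

theorem theorem1:
  fixes X :: "real ^ 'p ^ 'n" and Y :: "real ^ 'n"
  assumes "CARD('p) \<le> CARD('n)"
    and "\<And>j. norm (column j X) = 1"
    and inv: "invertible (transpose X ** X)"
    and dd: "\<And>j. matrix_inv (transpose X ** X) $ j $ j >
               (\<Sum>i\<in>UNIV - {j}. \<bar>matrix_inv (transpose X ** X) $ i $ j\<bar>)"
  shows "\<forall>lam > 0. \<forall>b. is_lasso_solution X Y lam b \<longleftrightarrow> is_dantzig_solution X Y lam b"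
proof (intro allI impI)
  fix lam :: real and b
  assume lam: "lam > 0"
  have kkt: "\<bar>(transpose X *v (Y - X *v d))$j\<bar> \<le> lam"
    "d$j \<noteq> 0 \<Longrightarrow> (transpose X *v (Y - X *v d))$j = lam * sgn (d$j)"
    if D: "is_dantzig_solution X Y lam d" for d j
  proof -
    show "\<bar>(transpose X *v (Y - X *v d))$j\<bar> \<le> lam" using D
      unfolding is_dantzig_solution_def dantzig_feasible_def linfnorm_le by blast
    show "d$j \<noteq> 0 \<Longrightarrow> (transpose X *v (Y - X *v d))$j = lam * sgn (d$j)"
      using dantzig_kkt[OF inv dd D] by blast
  qed
  show "is_lasso_solution X Y lam b \<longleftrightarrow> is_dantzig_solution X Y lam b"
  proof
    assume L: "is_lasso_solution X Y lam b"
    obtain d where D: "is_dantzig_solution X Y lam d" using dantzig_exists[OF inv] lam by fastforce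
    have "b = d"
    proof (rule ccontr)
      assume "b \<noteq> d"
      hence "d \<noteq> b" by simp
      hence "lasso_obj X Y lam b > lasso_obj X Y lam d"
        using kkt_unique[of X Y d lam b, OF inv] kkt[OF D] by blast
      thus False using L unfolding is_lasso_solution_def by (meson not_le)
    qed
    thus "is_dantzig_solution X Y lam b" using D by simp
  next
    assume D: "is_dantzig_solution X Y lam b"
    show "is_lasso_solution X Y lam b" unfolding is_lasso_solution_def
    proof
      fix b'
      have "lasso_obj X Y lam b' \<ge> lasso_obj X Y lam b + (1/2) * (norm (X *v (b' - b)))\<^sup>2"
        by (rule kkt_min[OF kkt(1)[OF D] kkt(2)[OF D]])
      moreover have "(1/2) * (norm (X *v (b' - b)))\<^sup>2 \<ge> 0" by simp
      ultimately show "lasso_obj X Y lam b \<le> lasso_obj X Y lam b'" by linarith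
    qed
  qed
qed

end
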